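(* Let $t>1$, $\eta>1$, $m\ge1$, $d>0$ and $w\in(0,1)$, and suppose $$d\le\frac{\eta\log(1/w)}{t}+\frac{2\eta\log(m+\log_\eta t)}{t}.$$ Then $$t\le\frac{2\eta}{d}\log\Big(2m+2+2\log_\eta\frac{2}{\log\eta}+2[\log_\eta(1/d)]_+\Big)+\frac{2\eta}{d}\log(1/w),$$ where $[x]_+=\max\{x,0\}$. *)

theory Defs
  imports Complex_Main
begin

end

theory Submission
  imports Defs
begin

theorem lemma2:
  fixes t \<eta> m d w :: real
  assumes "t > 1" and "\<eta> > 1" and "m \<ge> 1" and "d > 0" and "0 < w" and "w < 1"
    and "d \<le> \<eta> * ln (1 / w) / t + 2 * \<eta> * ln (m + log \<eta> t) / t"
  shows "t \<le> 2 * \<eta> / d * ln (2 * m + 2 + 2 * log \<eta> (2 / ln \<eta>)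
                 + 2 * max (log \<eta> (1 / d)) 0) + 2 * \<eta> / d * ln (1 / w)"
proof -
  define L where "L = ln \<eta>"
  define a where "a = ln (1 / w)"
  define Y where "Y = 2 * m + 2 + 2 * log \<eta> (2 / ln \<eta>) + 2 * max (log \<eta> (1 / d)) 0"
  define s where "s = d * t / (2 * \<eta>)"
  define X where "X = m + log \<eta> t"
  have L0: "L > 0" using assms(2) by (simp add: L_def)
  have a0: "a \<ge> 0" using assms(5,6) by (simp add: a_def)
  have s0: "s > 0" using assms by (simp add: s_def)
  have "ln (L / 2) \<le> L / 2 - 1" using L0 ln_le_minus_one by simp
  hence "ln (2 / L) \<ge> - L" using L0 by (simp add: ln_div)
  hence "ln (2 / L) / L \<ge> -1" using L0 by (simp add: field_simps)
  hence lg: "log \<eta> (2 / ln \<eta>) \<ge> -1" by (simp add: log_def L_def)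
  have Y2: "Y \<ge> 2" unfolding Y_def using lg assms(3) by linarith
  have lt: "log \<eta> t > 0" using assms(1,2) by simp
  have X0: "X > 0" using lt assms(3) by (simp add: X_def)
  have teq: "t = (2 / L) * (1 / d) * \<eta> * (L * s)" using L0 assms by (simp add: s_def field_simps)
  have "ln t = ln (2 / L) + ln (1 / d) + ln \<eta> + ln (L * s)"
  proof -
    have p1: "(2 / L) * (1 / d) > 0" "\<eta> > 0" "L * s > 0" "(2 / L) > 0" "1 / d > 0"
      using L0 assms s0 by auto
    have "ln ((2 / L) * (1 / d) * \<eta> * (L * s)) = ln ((2 / L) * (1 / d) * \<eta>) + ln (L * s)"
      by (rule ln_mult_pos) (use p1 in auto)
    hence "ln t = ln ((2 / L) * (1 / d) * \<eta>) + ln (L * s)" using teq by metis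
    also have "ln ((2 / L) * (1 / d) * \<eta>) = ln ((2 / L) * (1 / d)) + ln \<eta>"
      by (rule ln_mult_pos) (use p1 in auto)
    also have "ln ((2 / L) * (1 / d)) = ln (2 / L) + ln (1 / d)"
      by (rule ln_mult_pos) (use p1 in auto)
    finally show ?thesis .
  qed
  hence f1: "log \<eta> t = log \<eta> (2 / L) + log \<eta> (1 / d) + 1 + ln (L * s) / L"
    using L0 by (simp add: log_def L_def add_divide_distrib)
  have "ln (L * s) \<le> L * s - 1" using L0 s0 ln_le_minus_one by simp
  hence f2: "ln (L * s) / L \<le> s" using L0 by (simp add: field_simps)
  have f3: "log \<eta> (1 / d) \<le> max (log \<eta> (1 / d)) 0" by simp
  have gen: "m + A \<le> (2 * m + 2 + 2 * B + 2 * M) / 2 + S"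
    if "A = B + D + 1 + E" "E \<le> S" "D \<le> M" for A B D E S M :: real using that by argo
  have XY: "X \<le> Y / 2 + s"
    unfolding X_def Y_def L_def[symmetric] by (rule gen[OF f1 f2 f3])
  have tp: "t > 0" using assms(1) by simp
  have "d * t \<le> (\<eta> * a / t + 2 * \<eta> * ln X / t) * t"
    using mult_right_mono[OF assms(7)] tp unfolding a_def X_def by simp
  also have "\<dots> = \<eta> * a + 2 * \<eta> * ln X" using tp by (simp add: distrib_right)
  finally have dt: "d * t \<le> \<eta> * a + 2 * \<eta> * ln X" .
  have "s = d * t / (2 * \<eta>)" by (simp add: s_def)
  also have "\<dots> \<le> (\<eta> * a + 2 * \<eta> * ln X) / (2 * \<eta>)"
    using dt assms(2) by (intro divide_right_mono) auto
  also have "\<dots> = a / 2 + ln X" using assms(2) by (simp add: add_divide_distrib)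
  finally have "s \<le> a / 2 + ln X" .
  hence "exp (s - a / 2) \<le> exp (ln X)" by simp
  hence E: "exp (s - a / 2) \<le> Y / 2 + s" using X0 XY by simp
  have "s \<le> ln Y + a"
  proof (rule ccontr)
    assume "\<not> ?thesis"
    hence c: "s > ln Y + a" by simp
    define u where "u = s - a / 2"
    have Ypos: "Y > 0" using Y2 by simp
    have uY: "u \<ge> ln Y" using c a0 by (simp add: u_def)
    have "exp (u - ln Y) \<ge> 1 + (u - ln Y)" by (rule exp_ge_add_one_self)
    hence "exp u \<ge> Y * (1 + (u - ln Y))" using Ypos by (simp add: exp_diff field_simps)
    moreover have "2 * (u - ln Y) \<le> Y * (u - ln Y)"
      using Y2 uY by (intro mult_right_mono) auto
    ultimately have m1: "exp u \<ge> Y + 2 * (u - ln Y)" by (simp add: algebra_simps)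
    have Eu: "exp u \<le> Y / 2 + s" using E by (simp add: u_def)
    have "a = 2 * (s - u)" by (simp add: u_def)
    hence m2: "exp u < Y / 2 + 2 * u - ln Y" using Eu c by argo
    have "ln Y \<le> Y / 2"
    proof -
      have "ln Y = 2 * ln (sqrt Y)" using Ypos by (simp add: ln_sqrt)
      also have "\<dots> \<le> 2 * (sqrt Y - 1)" using ln_le_minus_one[of "sqrt Y"] Ypos by simp
      also have "\<dots> \<le> Y / 2"
      proof -
        have "(sqrt Y - 2)^2 \<ge> 0" by simp
        thus ?thesis using Ypos by (simp add: power2_eq_square algebra_simps)
      qed
      finally show ?thesis .
    qed
    thus False using m1 m2 by argo
  qed
  hence "d * t / (2 * \<eta>) \<le> ln Y + a" by (simp add: s_def)
  hence "t \<le> 2 * \<eta> / d * (ln Y + a)" using assms(2,4) by (simp add: field_simps)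
  thus ?thesis unfolding Y_def a_def by (simp add: distrib_left)
qed

end
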